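(* Let $n\ge 4$, $t\ge 1$, and $l_1,\dots,l_t\ge 1$ be integers, and put $n'=\sum_{i=1}^{t}(l_i-1)$; assume $n-n'\ge 3$. Then the chordless cycle $C_n$ has an IP-SEG representation with exactly $t$ interval arcs, of lengths $l_1,\dots,l_t$, if and only if $C_{n-n'}$ has an IP-SEG representation with exactly $t$ interval arcs, each of length $1$.
   Context: Let $L_1$ and $L_2$ be two distinct parallel horizontal lines in the plane. A closed straight line segment is an interval segment if both of its endpoints lie on the same line $L_i$, and a permutation segment if one endpoint lies on $L_1$ and the other on $L_2$. An IP-SEG model is a finite family of interval and permutation segments; its intersection graph has one vertex per segment, adjacent iff the segments intersect. For $m\ge 3$, $C_m$ is the chordless cycle on $v_1,\dots,v_m$ with $v_i$ adjacent to $v_{i+1}$ (indices mod $m$) and no other edges. An IP-SEG representation of $C_m$ is an IP-SEG model with segments $s(v_1),\dots,s(v_m)$ whose intersection graph is $C_m$ with $s(v_i)$ corresponding to $v_i$. If such a representation contains both interval and permutation segments, an interval arc is a maximal sequence $s(v_i),s(v_{i+1}),\dots,s(v_j)$ of cyclically consecutive segments that are all interval segments (so $s(v_{i-1})$ and $s(v_{j+1})$ are permutation segments, indices mod $m$); its length is the number of segments in it. Permutation arcs are defined analogously. *)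

theory Defs
  imports "HOL-Analysis.Analysis" "HOL-Library.Multiset"
begin

text \<open>The two distinct parallel
horizontal lines are L1 = {y = a} and L2 = {y = b} with a \<noteq> b.\<close>

type_synonym pt = "real \<times> real"
type_synonym seg = "pt \<times> pt"

definition seg_set :: "seg \<Rightarrow> pt set" where
  "seg_set s = closed_segment (fst s) (snd s)"

definition interval_seg :: "real \<Rightarrow> real \<Rightarrow> seg \<Rightarrow> bool" where
  "interval_seg a b s \<longleftrightarrow>
     (snd (fst s) = a \<and> snd (snd s) = a) \<or> (snd (fst s) = b \<and> snd (snd s) = b)"

definition perm_seg :: "real \<Rightarrow> real \<Rightarrow> seg \<Rightarrow> bool" where
  "perm_seg a b s \<longleftrightarrow>
     (snd (fst s) = a \<and> snd (snd s) = b) \<or> (snd (fst s) = b \<and> snd (snd s) = a)"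

definition cycle_adj :: "nat \<Rightarrow> nat \<Rightarrow> nat \<Rightarrow> bool" where
  "cycle_adj m i j \<longleftrightarrow> j = (i + 1) mod m \<or> i = (j + 1) mod m"

definition ipseg_rep_cycle :: "real \<Rightarrow> real \<Rightarrow> nat \<Rightarrow> (nat \<Rightarrow> seg) \<Rightarrow> bool" where
  "ipseg_rep_cycle a b m s \<longleftrightarrow>
     (\<forall>i<m. interval_seg a b (s i) \<or> perm_seg a b (s i)) \<and>
     (\<forall>i<m. \<forall>j<m. i \<noteq> j \<longrightarrow>
        (seg_set (s i) \<inter> seg_set (s j) \<noteq> {} \<longleftrightarrow> cycle_adj m i j))"

text \<open>(i, k): an interval arc starting at vertex i of length k, i.e. the maximal run
s i, s (i+1), ..., s (i+k-1) (indices mod m) of interval segments.\<close>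
definition interval_arc :: "real \<Rightarrow> real \<Rightarrow> nat \<Rightarrow> (nat \<Rightarrow> seg) \<Rightarrow> nat \<Rightarrow> nat \<Rightarrow> bool" where
  "interval_arc a b m s i k \<longleftrightarrow>
     i < m \<and> 1 \<le> k \<and>
     (\<forall>j<k. interval_seg a b (s ((i + j) mod m))) \<and>
     perm_seg a b (s ((i + m - 1) mod m)) \<and>
     perm_seg a b (s ((i + k) mod m))"

definition interval_arcs :: "real \<Rightarrow> real \<Rightarrow> nat \<Rightarrow> (nat \<Rightarrow> seg) \<Rightarrow> (nat \<times> nat) set" where
  "interval_arcs a b m s = {(i, k). interval_arc a b m s i k}"

definition has_rep_with_interval_arcs :: "real \<Rightarrow> real \<Rightarrow> nat \<Rightarrow> nat list \<Rightarrow> bool" where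
  "has_rep_with_interval_arcs a b m ls \<longleftrightarrow>
     (\<exists>s. ipseg_rep_cycle a b m s \<and>
          (\<exists>i<m. interval_seg a b (s i)) \<and> (\<exists>i<m. perm_seg a b (s i)) \<and>
          card (interval_arcs a b m s) = length ls \<and>
          image_mset snd (mset_set (interval_arcs a b m s)) = mset ls)"

end

theory Submission
  imports Defs
begin

lemma mem_seg:
  "(x,y) \<in> closed_segment (x0,y0) (x1,y1) \<longleftrightarrow>
   (\<exists>t::real. 0\<le>t \<and> t\<le>1 \<and> x = (1-t)*x0 + t*x1 \<and> y = (1-t)*y0 + t*y1)"
  by (auto simp: closed_segment_def)

lemma A: fixes x0 x1 t :: real assumes "0\<le>t" "t\<le>1" shows "min x0 x1 \<le> (1-t)*x0 + t*x1"
proof -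
  have "(1-t)*min x0 x1 \<le> (1-t)*x0" "t * min x0 x1 \<le> t*x1" using assms by (auto intro!: mult_left_mono)
  then show ?thesis by (simp add: algebra_simps)
qed
lemma B: fixes x0 x1 t :: real assumes "0\<le>t" "t\<le>1" shows "(1-t)*x0 + t*x1 \<le> max x0 x1"
proof -
  have "(1-t)*x0 \<le> (1-t)*max x0 x1" "t*x1 \<le> t * max x0 x1" using assms by (auto intro!: mult_left_mono)
  then show ?thesis by (simp add: algebra_simps)
qed

lemma seg_hor:
  "closed_segment ((x0::real),(c::real)) (x1,c) = {p. snd p = c \<and> min x0 x1 \<le> fst p \<and> fst p \<le> max x0 x1}"
proof (intro set_eqI iffI)
  fix p assume "p \<in> closed_segment (x0,c) (x1,c)"
  moreover obtain x y where p: "p = (x,y)" by (cases p)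
  ultimately obtain t where t: "0\<le>t" "t\<le>1" "x = (1-t)*x0 + t*x1" "y = (1-t)*c + t*c" by (auto simp: mem_seg)
  have "y = c" using t by (simp add: algebra_simps)
  moreover have "min x0 x1 \<le> x" using t A by simp
  moreover have "x \<le> max x0 x1" using t B by simp
  ultimately show "p \<in> {p. snd p = c \<and> min x0 x1 \<le> fst p \<and> fst p \<le> max x0 x1}" using p by simp
next
  fix p assume "p \<in> {p. snd p = c \<and> min x0 x1 \<le> fst p \<and> fst p \<le> max x0 x1}"
  moreover obtain x y where p: "p = (x,y)" by (cases p)
  ultimately have h: "y = c" "min x0 x1 \<le> x" "x \<le> max x0 x1" by auto
  show "p \<in> closed_segment (x0,c) (x1,c)"
  proof (cases "x0 = x1")
    case True then show ?thesis using h p by (auto simp: mem_seg intro!: exI[of _ 0])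
  next
    case False
    define t where "t = (x - x0)/(x1-x0)"
    have t1: "0 \<le> t \<and> t \<le> 1" using h False unfolding t_def
      by (cases "x0 < x1") (auto simp: divide_simps min_def max_def split: if_splits)
    have "t*(x1-x0) = x - x0" using False unfolding t_def by simp
    then have t2: "x = (1-t)*x0 + t*x1" by (simp add: algebra_simps)
    show ?thesis unfolding p mem_seg using t1 t2 h by (intro exI[of _ t]) (simp add: algebra_simps)
  qed
qed

lemma perm_trace1:
  fixes x x0 x1 :: real
  assumes "c \<noteq> (d::real)"
  shows "(x,c) \<in> closed_segment (x0,c) (x1,d) \<longleftrightarrow> x = x0"
proof
  assume "(x,c) \<in> closed_segment (x0,c) (x1,d)"
  then obtain t where t: "0\<le>t" "t\<le>1" "x = (1-t)*x0 + t*x1" "c = (1-t)*c + t*d" by (auto simp: mem_seg)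
  then have "t*(d-c) = 0" by (auto simp: algebra_simps)
  then have "t = 0" using assms by simp
  then show "x = x0" using t by simp
next
  assume "x = x0" then show "(x,c) \<in> closed_segment (x0,c) (x1,d)" by simp
qed

lemma perm_trace2:
  fixes x x0 x1 :: real
  assumes "c \<noteq> (d::real)"
  shows "(x,c) \<in> closed_segment (x0,d) (x1,c) \<longleftrightarrow> x = x1"
  using perm_trace1[OF assms, of x x1 x0] by (simp add: closed_segment_commute)

definition tr :: "real \<Rightarrow> seg \<Rightarrow> real set" where
  "tr c s = {x. (x,c) \<in> seg_set s}"

lemma tr_interval:
  assumes "a \<noteq> b" "interval_seg a b s \<or> perm_seg a b s" "c = a \<or> c = b"
  shows "\<exists>lo hi. tr c s = {lo..hi}"
proof -
  obtain x0 y0 x1 y1 where s: "s = ((x0,y0),(x1,y1))" by (metis prod.collapse)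
  consider "y0 = c" "y1 = c" | "y0 = c" "y1 \<noteq> c" | "y0 \<noteq> c" "y1 = c" | "y0 \<noteq> c" "y1 \<noteq> c" by blast
  then show ?thesis
  proof cases
    case 1 then show ?thesis
      by (rule_tac x="min x0 x1" in exI, rule_tac x="max x0 x1" in exI) (auto simp: tr_def seg_set_def s seg_hor)
  next
    case 2 then show ?thesis
      by (rule_tac x="x0" in exI, rule_tac x="x0" in exI) (auto simp: tr_def seg_set_def s perm_trace1)
  next
    case 3 then show ?thesis
      by (rule_tac x="x1" in exI, rule_tac x="x1" in exI) (auto simp: tr_def seg_set_def s perm_trace2)
  next
    case 4
    then have "y0 = y1" using assms s by (auto simp: interval_seg_def perm_seg_def)
    then have "tr c s = {}" using 4 by (auto simp: tr_def seg_set_def s seg_hor)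
    then show ?thesis by (rule_tac x=1 in exI, rule_tac x=0 in exI) simp
  qed
qed

definition on_line :: "real \<Rightarrow> seg \<Rightarrow> bool" where
  "on_line c s \<longleftrightarrow> (\<forall>p\<in>seg_set s. snd p = c)"

lemma on_line_hor: "on_line c ((x0,c),(x1,c))"
  by (auto simp: on_line_def seg_set_def seg_hor)

lemma disj_tr:
  assumes "on_line c X"
  shows "seg_set X \<inter> seg_set Z = {} \<longleftrightarrow> tr c X \<inter> tr c Z = {}"
proof
  assume h: "seg_set X \<inter> seg_set Z = {}" then show "tr c X \<inter> tr c Z = {}" by (auto simp: tr_def)
next
  assume h: "tr c X \<inter> tr c Z = {}"
  show "seg_set X \<inter> seg_set Z = {}"
  proof (rule ccontr)
    assume "seg_set X \<inter> seg_set Z \<noteq> {}"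
    then obtain x y where xy: "(x,y) \<in> seg_set X" "(x,y) \<in> seg_set Z" by auto
    then have "y = c" using assms unfolding on_line_def by fastforce
    then show False using h xy by (auto simp: tr_def)
  qed
qed

lemma sub_tr:
  assumes "on_line c X" "on_line c Y"
  shows "seg_set X \<subseteq> seg_set Y \<longleftrightarrow> tr c X \<subseteq> tr c Y"
proof
  assume h: "seg_set X \<subseteq> seg_set Y" then show "tr c X \<subseteq> tr c Y" by (auto simp: tr_def)
next
  assume h: "tr c X \<subseteq> tr c Y"
  show "seg_set X \<subseteq> seg_set Y"
  proof
    fix p assume p: "p \<in> seg_set X"
    obtain x y where xy: "p = (x,y)" by (cases p)
    then have "y = c" using assms p unfolding on_line_def by fastforce
    then show "p \<in> seg_set Y" using h xy p by (auto simp: tr_def)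
  qed
qed

lemma tr_hor: "tr c ((x0,c),(x1,c)) = {min x0 x1 .. max x0 x1}"
  by (auto simp: tr_def seg_set_def seg_hor)


lemma iv_form:
  assumes "interval_seg a b s"
  shows "\<exists>x0 x1 c. s = ((x0,c),(x1,c)) \<and> (c = a \<or> c = b)"
  using assms unfolding interval_seg_def
  by (metis prod.collapse)

lemma tr_disj:
  assumes "seg_set J \<inter> seg_set K = {}"
  shows "tr c J \<inter> tr c K = {}"
  using assms by (auto simp: tr_def)

lemma tr_meet:
  assumes "tr c J \<inter> tr c K \<noteq> {}"
  shows "seg_set J \<inter> seg_set K \<noteq> {}"
  using assms by (auto simp: tr_def)

lemma merge_geom:
  assumes "interval_seg a b X" "interval_seg a b Y" "seg_set X \<inter> seg_set Y \<noteq> {}"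
  shows "\<exists>Z. interval_seg a b Z \<and> seg_set Z = seg_set X \<union> seg_set Y"
proof -
  obtain x0 x1 c where X: "X = ((x0,c),(x1,c))" "c = a \<or> c = b" using iv_form[OF assms(1)] by blast
  obtain y0 y1 e where Y: "Y = ((y0,e),(y1,e))" "e = a \<or> e = b" using iv_form[OF assms(2)] by blast
  obtain q where q: "q \<in> seg_set X" "q \<in> seg_set Y" using assms(3) by blast
  have ce: "c = e" using q by (simp add: X Y seg_set_def seg_hor)
  define lx where "lx = min x0 x1"
  define hx where "hx = max x0 x1"
  define ly where "ly = min y0 y1"
  define hy where "hy = max y0 y1"
  have qx: "lx \<le> fst q" "fst q \<le> hx" "ly \<le> fst q" "fst q \<le> hy"
    using q by (auto simp: X Y seg_set_def seg_hor lx_def hx_def ly_def hy_def)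
  define Z where "Z = ((min lx ly, c), (max hx hy, c))"
  have "interval_seg a b Z" using X(2) by (auto simp: Z_def interval_seg_def)
  moreover have "seg_set Z = seg_set X \<union> seg_set Y"
  proof -
    have iff: "\<And>z. (min lx ly \<le> z \<and> z \<le> max hx hy) \<longleftrightarrow> (lx \<le> z \<and> z \<le> hx) \<or> (ly \<le> z \<and> z \<le> hy)"
      using qx by (auto simp: min_def max_def)
    have "lx \<le> hx" "ly \<le> hy" using qx by auto
    then have e1: "min (min lx ly) (max hx hy) = min lx ly" and e2: "max (min lx ly) (max hx hy) = max hx hy"
      by (auto simp: min_def max_def)
    have sz: "seg_set Z = {p. snd p = c \<and> min lx ly \<le> fst p \<and> fst p \<le> max hx hy}"
      by (simp only: Z_def seg_set_def fst_conv snd_conv seg_hor e1 e2)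
    have sx: "seg_set X = {p. snd p = c \<and> lx \<le> fst p \<and> fst p \<le> hx}"
      by (simp only: X seg_set_def fst_conv snd_conv seg_hor lx_def hx_def)
    have sy: "seg_set Y = {p. snd p = c \<and> ly \<le> fst p \<and> fst p \<le> hy}"
      by (simp only: Y seg_set_def fst_conv snd_conv seg_hor ly_def hy_def ce)
    show ?thesis unfolding sz sx sy using iff by blast
  qed
  ultimately show ?thesis by blast
qed

lemma split_geom:
  assumes ab: "a \<noteq> b" and iX: "interval_seg a b X"
    and J: "interval_seg a b J \<or> perm_seg a b J" and K: "interval_seg a b K \<or> perm_seg a b K"
    and XJ: "seg_set X \<inter> seg_set J \<noteq> {}" and XK: "seg_set X \<inter> seg_set K \<noteq> {}"
    and JK: "seg_set J \<inter> seg_set K = {}"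
  shows "\<exists>X1 X2. interval_seg a b X1 \<and> interval_seg a b X2 \<and>
     seg_set X1 \<subseteq> seg_set X \<and> seg_set X2 \<subseteq> seg_set X \<and>
     seg_set X1 \<inter> seg_set X2 \<noteq> {} \<and>
     seg_set X1 \<inter> seg_set J \<noteq> {} \<and> seg_set X1 \<inter> seg_set K = {} \<and>
     seg_set X2 \<inter> seg_set K \<noteq> {} \<and> seg_set X2 \<inter> seg_set J = {}"
proof -
  obtain x0 x1 c where X: "X = ((x0,c),(x1,c))" and c: "c = a \<or> c = b" using iv_form[OF iX] by blast
  have olX: "on_line c X" using X on_line_hor by simp
  obtain j1 j2 where trJ: "tr c J = {j1..j2}" using tr_interval[OF ab J c] by blast
  obtain k1 k2 where trK: "tr c K = {k1..k2}" using tr_interval[OF ab K c] by blast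
  define lo where "lo = min x0 x1"
  define hi where "hi = max x0 x1"
  have trX: "tr c X = {lo..hi}" using X tr_hor lo_def hi_def by simp
  have "tr c X \<inter> tr c J \<noteq> {}" using disj_tr[OF olX] XJ by simp
  then obtain xj where "xj \<in> tr c X \<inter> tr c J" by blast
  then have xj: "lo \<le> xj" "xj \<le> hi" "j1 \<le> xj" "xj \<le> j2" using trX trJ by auto
  have "tr c X \<inter> tr c K \<noteq> {}" using disj_tr[OF olX] XK by simp
  then obtain xk where "xk \<in> tr c X \<inter> tr c K" by blast
  then have xk: "lo \<le> xk" "xk \<le> hi" "k1 \<le> xk" "xk \<le> k2" using trX trK by auto
  have dJK: "{j1..j2} \<inter> {k1..k2} = {}" using tr_disj[OF JK, of c] trJ trK by simp
  have "j2 < k1 \<or> k2 < j1"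
  proof (rule ccontr)
    assume "\<not> (j2 < k1 \<or> k2 < j1)"
    then have "max j1 k1 \<in> {j1..j2} \<inter> {k1..k2}" using xj xk by (auto simp: max_def)
    then show False using dJK by blast
  qed
  then show ?thesis
  proof
    assume lt: "j2 < k1"
    define c0 where "c0 = (j2 + k1)/2"
    define X1 where "X1 = ((lo,c),(c0,c))"
    define X2 where "X2 = ((c0,c),(hi,c))"
    have o1: "on_line c X1" and o2: "on_line c X2" unfolding X1_def X2_def by (rule on_line_hor)+
    have t1: "tr c X1 = {lo..c0}" unfolding X1_def tr_hor using xj lt c0_def by (simp add: min_def max_def)
    have t2: "tr c X2 = {c0..hi}" unfolding X2_def tr_hor using xk lt c0_def by (simp add: min_def max_def)
    have i1: "interval_seg a b X1" "interval_seg a b X2" using c by (auto simp: X1_def X2_def interval_seg_def)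
    have "seg_set X1 \<subseteq> seg_set X" using sub_tr[OF o1 olX] t1 trX xk lt c0_def by auto
    moreover have "seg_set X2 \<subseteq> seg_set X" using sub_tr[OF o2 olX] t2 trX xj lt c0_def by auto
    moreover have "seg_set X1 \<inter> seg_set X2 \<noteq> {}"
      using disj_tr[OF o1, of X2] t1 t2 xj xk lt c0_def by (auto intro!: exI[of _ c0])
    moreover have "seg_set X1 \<inter> seg_set J \<noteq> {}"
      using disj_tr[OF o1, of J] t1 trJ xj lt c0_def by (auto intro!: exI[of _ xj])
    moreover have "seg_set X1 \<inter> seg_set K = {}"
      using disj_tr[OF o1, of K] t1 trK lt c0_def by auto
    moreover have "seg_set X2 \<inter> seg_set K \<noteq> {}"
      using disj_tr[OF o2, of K] t2 trK xk lt c0_def by (auto intro!: exI[of _ xk])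
    moreover have "seg_set X2 \<inter> seg_set J = {}"
      using disj_tr[OF o2, of J] t2 trJ lt c0_def by auto
    ultimately show ?thesis using i1 by blast
  next
    assume lt: "k2 < j1"
    define c0 where "c0 = (k2 + j1)/2"
    define X1 where "X1 = ((c0,c),(hi,c))"
    define X2 where "X2 = ((lo,c),(c0,c))"
    have o1: "on_line c X1" and o2: "on_line c X2" unfolding X1_def X2_def by (rule on_line_hor)+
    have t1: "tr c X1 = {c0..hi}" unfolding X1_def tr_hor using xj lt c0_def by (simp add: min_def max_def)
    have t2: "tr c X2 = {lo..c0}" unfolding X2_def tr_hor using xk lt c0_def by (simp add: min_def max_def)
    have i1: "interval_seg a b X1" "interval_seg a b X2" using c by (auto simp: X1_def X2_def interval_seg_def)
    have "seg_set X1 \<subseteq> seg_set X" using sub_tr[OF o1 olX] t1 trX xk lt c0_def by auto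
    moreover have "seg_set X2 \<subseteq> seg_set X" using sub_tr[OF o2 olX] t2 trX xj lt c0_def by auto
    moreover have "seg_set X1 \<inter> seg_set X2 \<noteq> {}"
      using disj_tr[OF o1, of X2] t1 t2 xj xk lt c0_def by (auto intro!: exI[of _ c0])
    moreover have "seg_set X1 \<inter> seg_set J \<noteq> {}"
      using disj_tr[OF o1, of J] t1 trJ xj lt c0_def by (auto intro!: exI[of _ xj])
    moreover have "seg_set X1 \<inter> seg_set K = {}"
      using disj_tr[OF o1, of K] t1 trK lt c0_def by auto
    moreover have "seg_set X2 \<inter> seg_set K \<noteq> {}"
      using disj_tr[OF o2, of K] t2 trK xk lt c0_def by (auto intro!: exI[of _ xk])
    moreover have "seg_set X2 \<inter> seg_set J = {}"
      using disj_tr[OF o2, of J] t2 trJ lt c0_def by auto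
    ultimately show ?thesis using i1 by blast
  qed
qed


lemma excl: "a \<noteq> b \<Longrightarrow> interval_seg a b s \<Longrightarrow> \<not> perm_seg a b s"
  by (auto simp: interval_seg_def perm_seg_def)

lemma adj_char:
  assumes "i < m" "j < m"
  shows "cycle_adj m i j \<longleftrightarrow> (j = i+1 \<or> i = j+1 \<or> (i=0 \<and> j=m-1) \<or> (j=0 \<and> i=m-1))"
proof -
  have "(i+1) mod m = (if i+1 = m then 0 else i+1)" using assms by auto
  moreover have "(j+1) mod m = (if j+1 = m then 0 else j+1)" using assms by auto
  ultimately show ?thesis unfolding cycle_adj_def using assms by auto
qed

lemma mod_add_cancel: "((x::nat) + r) mod m = (y + r) mod m \<longleftrightarrow> x mod m = y mod m"
  by (simp add: nat_mod_eq_iff)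

definition rot :: "nat \<Rightarrow> nat \<Rightarrow> (nat \<Rightarrow> seg) \<Rightarrow> nat \<Rightarrow> seg" where
  "rot m r s j = s ((j + r) mod m)"

lemma adj_rot:
  assumes "i < m" "j < m"
  shows "cycle_adj m ((i+r) mod m) ((j+r) mod m) = cycle_adj m i j"
proof -
  have e1: "((i+r) mod m + 1) mod m = ((i+1) + r) mod m" by (simp add: mod_simps ac_simps)
  have e2: "((j+r) mod m + 1) mod m = ((j+1) + r) mod m" by (simp add: mod_simps ac_simps)
  have "(j + r) mod m = ((i+1) + r) mod m \<longleftrightarrow> j = (i+1) mod m"
    unfolding mod_add_cancel using assms by simp
  moreover have "(i + r) mod m = ((j+1) + r) mod m \<longleftrightarrow> i = (j+1) mod m"
    unfolding mod_add_cancel using assms by simp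
  ultimately show ?thesis unfolding cycle_adj_def e1 e2 by simp
qed

lemma rep_D:
  "ipseg_rep_cycle a b n s \<Longrightarrow> i < n \<Longrightarrow> j < n \<Longrightarrow> i \<noteq> j \<Longrightarrow>
   (seg_set (s i) \<inter> seg_set (s j) \<noteq> {} \<longleftrightarrow> cycle_adj n i j)"
  unfolding ipseg_rep_cycle_def by blast

lemma rep_T:
  "ipseg_rep_cycle a b n s \<Longrightarrow> i < n \<Longrightarrow> interval_seg a b (s i) \<or> perm_seg a b (s i)"
  unfolding ipseg_rep_cycle_def by blast

lemma adj_sym: "cycle_adj n i j = cycle_adj n j i"
  unfolding cycle_adj_def by blast

lemma rep_intro:
  assumes "\<And>i. i < n \<Longrightarrow> interval_seg a b (s i) \<or> perm_seg a b (s i)"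
    and "\<And>i j. i < j \<Longrightarrow> j < n \<Longrightarrow> (seg_set (s i) \<inter> seg_set (s j) \<noteq> {} \<longleftrightarrow> cycle_adj n i j)"
  shows "ipseg_rep_cycle a b n s"
  unfolding ipseg_rep_cycle_def
proof (intro conjI allI impI)
  fix i assume "i < n" then show "interval_seg a b (s i) \<or> perm_seg a b (s i)" using assms(1) by blast
next
  fix i j assume ij: "i < n" "j < n" "i \<noteq> j"
  show "(seg_set (s i) \<inter> seg_set (s j) \<noteq> {}) = cycle_adj n i j"
  proof (cases "i < j")
    case True then show ?thesis using assms(2) ij by blast
  next
    case False then have "j < i" using ij by simp
    then show ?thesis using assms(2)[of j i] ij by (simp add: Int_commute adj_sym)
  qed
qed

lemma rot_rep:
  assumes "0 < m" "ipseg_rep_cycle a b m s"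
  shows "ipseg_rep_cycle a b m (rot m r s)"
  unfolding ipseg_rep_cycle_def
proof (intro conjI allI impI)
  fix i assume "i < m"
  then show "interval_seg a b (rot m r s i) \<or> perm_seg a b (rot m r s i)"
    unfolding rot_def using rep_T[OF assms(2)] assms(1) by simp
next
  fix i j assume ij: "i < m" "j < m" "i \<noteq> j"
  have "(i + r) mod m \<noteq> (j+r) mod m" using ij unfolding mod_add_cancel by simp
  then show "(seg_set (rot m r s i) \<inter> seg_set (rot m r s j) \<noteq> {}) = cycle_adj m i j"
    unfolding rot_def using rep_D[OF assms(2)] assms(1) adj_rot[OF ij(1,2)] by simp
qed

lemma arc_rot:
  assumes "0 < m"
  shows "interval_arc a b m (rot m r s) i k \<longleftrightarrow> i < m \<and> interval_arc a b m s ((i+r) mod m) k"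
proof -
  obtain m1 where m: "m = Suc m1" using assms by (cases m) auto
  have e1: "\<And>j. ((i+j) mod m + r) mod m = ((i+r) mod m + j) mod m" by (simp add: mod_simps ac_simps)
  have e2: "((i + m - 1) mod m + r) mod m = ((i+r) mod m + m - 1) mod m" unfolding m by (simp add: mod_simps ac_simps)
  have e3: "((i + k) mod m + r) mod m = ((i+r) mod m + k) mod m" by (simp add: mod_simps ac_simps)
  show ?thesis unfolding interval_arc_def rot_def e1 e2 e3 using assms by auto
qed

lemma f_bij:
  assumes "0 < (m::nat)"
  shows "(\<lambda>i. (i + r) mod m) ` {..<m} = {..<m}" "inj_on (\<lambda>i. (i + r) mod m) {..<m}"
proof -
  show inj: "inj_on (\<lambda>i. (i + r) mod m) {..<m}"
    unfolding inj_on_def mod_add_cancel by simp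
  show "(\<lambda>i. (i + r) mod m) ` {..<m} = {..<m}"
    by (rule endo_inj_surj[OF _ _ inj]) (use assms in auto)
qed

lemma arcs_rot:
  assumes "0 < m"
  shows "interval_arcs a b m s = (\<lambda>(i,k). ((i+r) mod m, k)) ` interval_arcs a b m (rot m r s)"
    (is "?A = ?g ` ?B")
proof
  show "?g ` ?B \<subseteq> ?A" unfolding interval_arcs_def using arc_rot[OF assms] by auto
next
  show "?A \<subseteq> ?g ` ?B"
  proof
    fix x assume "x \<in> ?A"
    then obtain i k where x: "x = (i,k)" "interval_arc a b m s i k" unfolding interval_arcs_def by auto
    then have "i < m" unfolding interval_arc_def by simp
    then have "i \<in> (\<lambda>i. (i + r) mod m) ` {..<m}" using f_bij(1)[OF assms, of r] by simp
    then obtain i' where i': "i' < m" "(i' + r) mod m = i" by auto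
    then have "(i',k) \<in> ?B" unfolding interval_arcs_def using arc_rot[OF assms] x by auto
    then show "x \<in> ?g ` ?B" using x i' by force
  qed
qed

lemma mset_rot:
  assumes "0 < m"
  shows "image_mset snd (mset_set (interval_arcs a b m s)) = image_mset snd (mset_set (interval_arcs a b m (rot m r s)))"
proof -
  let ?g = "(\<lambda>(i,k). ((i+r) mod m, k))"
  have "inj_on ?g (interval_arcs a b m (rot m r s))"
  proof (rule inj_onI)
    fix x y assume x: "x \<in> interval_arcs a b m (rot m r s)" and y: "y \<in> interval_arcs a b m (rot m r s)"
      and e: "?g x = ?g y"
    obtain i k where xi: "x = (i,k)" by (cases x)
    obtain i' k' where yi: "y = (i',k')" by (cases y)
    have lt: "i < m" "i' < m" using x y xi yi by (auto simp: interval_arcs_def interval_arc_def)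
    have "(i + r) mod m = (i' + r) mod m" "k = k'" using e xi yi by auto
    moreover then have "i mod m = i' mod m" using mod_add_cancel[of i r m i'] by simp
    then have "i = i'" using lt by simp
    ultimately show "x = y" using xi yi by simp
  qed
  then have "mset_set (interval_arcs a b m s) = image_mset ?g (mset_set (interval_arcs a b m (rot m r s)))"
    using arcs_rot[OF assms, of a b s r] image_mset_mset_set by metis
  then show ?thesis by (simp add: multiset.map_comp comp_def case_prod_beta)
qed

lemma arc_len_lt:
  assumes ab: "a \<noteq> b" and arc: "interval_arc a b m s i k"
  shows "k < m"
proof (rule ccontr)
  assume "\<not> k < m"
  have m: "0 < m" using arc unfolding interval_arc_def by auto
  have "k mod m < k" using \<open>\<not> k < m\<close> m by (meson mod_less_divisor leI less_le_trans)
  then have "interval_seg a b (s ((i + k mod m) mod m))" using arc unfolding interval_arc_def by blast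
  moreover have "(i + k mod m) mod m = (i + k) mod m" by (simp add: mod_simps)
  ultimately show False using arc excl[OF ab] unfolding interval_arc_def by auto
qed

definition Bset :: "real \<Rightarrow> real \<Rightarrow> (nat \<Rightarrow> seg) \<Rightarrow> nat \<Rightarrow> (nat \<times> nat) set" where
  "Bset a b s p = {(i,k). 1 \<le> i \<and> 1 \<le> k \<and> i + k \<le> p \<and> (\<forall>j<k. interval_seg a b (s (i+j))) \<and>
      perm_seg a b (s (i-1)) \<and> perm_seg a b (s (i+k))}"

lemma Bset_cong:
  assumes "\<And>x. x \<le> p \<Longrightarrow> s x = s' x"
  shows "Bset a b s p = Bset a b s' p"
  unfolding Bset_def using assms by (auto; force)

lemma Bset_finite: "finite (Bset a b s p)"
proof -
  have "Bset a b s p \<subseteq> {..p} \<times> {..p}" unfolding Bset_def by auto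
  then show ?thesis by (rule finite_subset) auto
qed

lemma Bset_notin: "(p+1, q) \<notin> Bset a b s p"
  unfolding Bset_def by auto

lemma mset_ins:
  assumes "finite B" "x \<notin> B"
  shows "image_mset snd (mset_set (B \<union> {x})) = image_mset snd (mset_set B) + {#snd x#}"
  using assms by simp

lemma decomp:
  assumes ab: "a \<noteq> b" and p: "p + 1 < m" and P0: "perm_seg a b (s 0)" and Pp: "perm_seg a b (s p)"
    and Iv: "\<And>x. p < x \<Longrightarrow> x < m \<Longrightarrow> interval_seg a b (s x)"
  shows "interval_arcs a b m s = Bset a b s p \<union> {(p+1, m-1-p)}"
proof
  show "interval_arcs a b m s \<subseteq> Bset a b s p \<union> {(p+1, m-1-p)}"
  proof
    fix x assume "x \<in> interval_arcs a b m s"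
    then obtain i k where x: "x = (i,k)" and arc: "interval_arc a b m s i k"
      unfolding interval_arcs_def by auto
    have im: "i < m" and k1: "1 \<le> k" and A: "\<And>j. j < k \<Longrightarrow> interval_seg a b (s ((i+j) mod m))"
      and P1: "perm_seg a b (s ((i + m - 1) mod m))" and P2: "perm_seg a b (s ((i+k) mod m))"
      using arc unfolding interval_arc_def by auto
    have km: "k < m" using arc_len_lt[OF ab arc] .
    have iv: "interval_seg a b (s i)" using A[of 0] k1 im by simp
    have i0: "i \<noteq> 0"
    proof
      assume "i = 0" then show False using iv P0 excl[OF ab, of "s 0"] by simp
    qed
    have e1: "(i + m - 1) mod m = i - 1"
    proof -
      have h: "i + m - 1 = (i - 1) + m" using i0 by simp
      have "((i - 1) + m) mod m = i - 1" using im by simp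
      then show ?thesis by (simp only: h)
    qed
    have P1': "perm_seg a b (s (i - 1))" using P1 e1 by simp
    show "x \<in> Bset a b s p \<union> {(p+1, m-1-p)}"
    proof (cases "i \<le> p")
      case True
      have ikp: "i + k \<le> p"
      proof (rule ccontr)
        assume "\<not> i + k \<le> p"
        then have "p - i < k" using True by simp
        then have "interval_seg a b (s ((i + (p-i)) mod m))" using A by blast
        then have "interval_seg a b (s p)" using True p by simp
        then show False using Pp excl[OF ab] by blast
      qed
      have "\<And>j. j < k \<Longrightarrow> interval_seg a b (s (i+j))"
      proof -
        fix j assume "j < k"
        then have "(i + j) mod m = i + j" using ikp p by simp
        then show "interval_seg a b (s (i+j))" using A[OF \<open>j<k\<close>] by simp
      qed
      moreover have "perm_seg a b (s (i+k))" using P2 ikp p by simp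
      ultimately have "(i,k) \<in> Bset a b s p" unfolding Bset_def using i0 k1 ikp P1' by auto
      then show ?thesis using x by simp
    next
      case False
      have ip: "i = p + 1"
      proof (rule ccontr)
        assume "i \<noteq> p + 1"
        then have "p < i - 1" "i - 1 < m" using False im by auto
        then show False using Iv P1' excl[OF ab] by blast
      qed
      have "i + k = m"
      proof (rule ccontr)
        assume ne: "i + k \<noteq> m"
        show False
        proof (cases "i + k < m")
          case True
          then have "perm_seg a b (s (i+k))" using P2 by simp
          moreover have "interval_seg a b (s (i+k))" using Iv[of "i+k"] True False by simp
          ultimately show False using excl[OF ab] by blast
        next
          case False
          then have "m - i < k" using ne im by arith
          then have "interval_seg a b (s ((i + (m-i)) mod m))" using A by blast
          then have "interval_seg a b (s 0)" using im by simp
          then show False using P0 excl[OF ab] by blast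
        qed
      qed
      then show ?thesis using x ip by auto
    qed
  qed
next
  show "Bset a b s p \<union> {(p+1, m-1-p)} \<subseteq> interval_arcs a b m s"
  proof
    fix x assume x: "x \<in> Bset a b s p \<union> {(p+1, m-1-p)}"
    show "x \<in> interval_arcs a b m s"
    proof (cases "x \<in> Bset a b s p")
      case True
      then obtain i k where x: "x = (i,k)" and i1: "1 \<le> i" and k1: "1 \<le> k" and ikp: "i + k \<le> p"
        and A: "\<forall>j<k. interval_seg a b (s (i+j))" and P1: "perm_seg a b (s (i-1))"
        and P2: "perm_seg a b (s (i+k))"
        unfolding Bset_def by auto
      have "(i + m - 1) mod m = i - 1"
      proof -
        have h: "i + m - 1 = (i - 1) + m" using i1 by simp
        have "((i - 1) + m) mod m = i - 1" using ikp p by simp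
        then show ?thesis by (simp only: h)
      qed
      moreover have "\<forall>j<k. (i+j) mod m = i + j" using ikp p by auto
      moreover have "(i+k) mod m = i + k" using ikp p by simp
      ultimately have "interval_arc a b m s i k"
        unfolding interval_arc_def using A P1 P2 k1 ikp p by auto
      then show ?thesis using x unfolding interval_arcs_def by simp
    next
      case False
      then have x: "x = (p+1, m-1-p)" using x by simp
      have "(p + 1 + m - 1) mod m = p" using p by simp
      moreover have "(p + 1 + (m - 1 - p)) mod m = 0" using p by simp
      moreover have "\<forall>j<m-1-p. (p + 1 + j) mod m = p + 1 + j" using p by auto
      moreover have "\<forall>j<m-1-p. interval_seg a b (s (p + 1 + j))" using Iv by auto
      ultimately have "interval_arc a b m s (p+1) (m-1-p)"
        unfolding interval_arc_def using p P0 Pp by auto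
      then show ?thesis using x unfolding interval_arcs_def by simp
    qed
  qed
qed


definition H :: "real \<Rightarrow> real \<Rightarrow> nat \<Rightarrow> nat multiset \<Rightarrow> bool" where
  "H a b m M \<longleftrightarrow> (\<exists>s. ipseg_rep_cycle a b m s \<and>
     (\<exists>i<m. interval_seg a b (s i)) \<and> (\<exists>i<m. perm_seg a b (s i)) \<and>
     image_mset snd (mset_set (interval_arcs a b m s)) = M)"

lemma has_rep_H: "has_rep_with_interval_arcs a b m ls \<longleftrightarrow> H a b m (mset ls)"
proof -
  have "\<And>A. image_mset snd (mset_set A) = mset ls \<Longrightarrow> card A = length ls"
    by (metis size_image_mset size_mset size_mset_set)
  then show ?thesis unfolding has_rep_with_interval_arcs_def H_def by metis
qed

lemma normalize:
  assumes ab: "a \<noteq> b" and HM: "H a b m M" and l: "l \<in># M"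
  shows "\<exists>s. ipseg_rep_cycle a b m s \<and> image_mset snd (mset_set (interval_arcs a b m s)) = M \<and>
     1 \<le> l \<and> l < m \<and> perm_seg a b (s 0) \<and> perm_seg a b (s (m-l-1)) \<and>
     (\<forall>x. m-l-1 < x \<and> x < m \<longrightarrow> interval_seg a b (s x))"
proof -
  obtain s0 where rep: "ipseg_rep_cycle a b m s0" and im: "image_mset snd (mset_set (interval_arcs a b m s0)) = M"
    using HM unfolding H_def by blast
  let ?A = "interval_arcs a b m s0"
  have "finite ?A"
  proof (rule ccontr)
    assume "infinite ?A" then have "M = {#}" using im by simp
    then show False using l by simp
  qed
  then obtain i where arc: "interval_arc a b m s0 i l" using l im unfolding interval_arcs_def by auto
  have im_m: "i < m" and l1: "1 \<le> l" using arc unfolding interval_arc_def by auto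
  have lm: "l < m" using arc_len_lt[OF ab arc] .
  have m0: "0 < m" using im_m by simp
  define r where "r = (i + l) mod m"
  define s where "s = rot m r s0"
  have rep': "ipseg_rep_cycle a b m s" unfolding s_def using rot_rep[OF m0 rep] .
  have im': "image_mset snd (mset_set (interval_arcs a b m s)) = M"
    unfolding s_def using mset_rot[OF m0] im by metis
  have "(m - l + r) mod m = i"
  proof -
    have "(m - l + r) mod m = (m - l + (i + l)) mod m" unfolding r_def by (simp add: mod_simps)
    also have "m - l + (i + l) = i + m" using lm by simp
    finally show ?thesis using im_m by simp
  qed
  then have arc': "interval_arc a b m s (m - l) l" unfolding s_def using arc_rot[OF m0] arc lm l1 by auto
  have A: "\<And>j. j < l \<Longrightarrow> interval_seg a b (s ((m - l + j) mod m))"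
    and P1: "perm_seg a b (s ((m - l + m - 1) mod m))" and P2: "perm_seg a b (s ((m - l + l) mod m))"
    using arc' unfolding interval_arc_def by auto
  have "perm_seg a b (s 0)" using P2 lm by simp
  moreover have "perm_seg a b (s (m-l-1))"
  proof -
    have h: "m - l + m - 1 = (m - l - 1) + m" using lm by simp
    have "((m - l - 1) + m) mod m = m - l - 1" using lm by (subst mod_add_self2) simp
    then show ?thesis using P1 by (simp only: h)
  qed
  moreover have "\<forall>x. m-l-1 < x \<and> x < m \<longrightarrow> interval_seg a b (s x)"
  proof (intro allI impI)
    fix x assume x: "m-l-1 < x \<and> x < m"
    then have "x - (m - l) < l" "(m - l + (x - (m-l))) mod m = x" using lm by auto
    then show "interval_seg a b (s x)" using A by metis
  qed
  ultimately show ?thesis using rep' im' l1 lm by blast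
qed


lemma im_split:
  assumes "image_mset snd (mset_set (Bset a b s p \<union> {(p+1, q)})) = M + {#q#}"
  shows "image_mset snd (mset_set (Bset a b s p)) = M"
  using assms mset_ins[OF Bset_finite Bset_notin] by simp

lemma merge_step:
  assumes ab: "a \<noteq> b" and m3: "3 \<le> m" and l1: "1 \<le> l" and HM: "H a b (m+1) (M + {#l+1#})"
  shows "H a b m (M + {#l#})"
proof -
  obtain s where rep: "ipseg_rep_cycle a b (m+1) s"
    and im: "image_mset snd (mset_set (interval_arcs a b (m+1) s)) = M + {#l+1#}"
    and lm: "l + 1 < m + 1" and P0: "perm_seg a b (s 0)" and Pp: "perm_seg a b (s (m+1-(l+1)-1))"
    and Iv: "\<forall>x. m+1-(l+1)-1 < x \<and> x < m+1 \<longrightarrow> interval_seg a b (s x)"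
    using normalize[OF ab HM, of "l+1"] by auto
  define p where "p = m - l - 1"
  have pe: "m+1-(l+1)-1 = p" unfolding p_def by simp
  have p1: "p + 1 < m" "p + 2 \<le> m" using lm l1 unfolding p_def by auto
  have Pp': "perm_seg a b (s p)" using Pp pe by simp
  have Iv': "\<And>x. p < x \<Longrightarrow> x < m + 1 \<Longrightarrow> interval_seg a b (s x)" using Iv pe by auto
  have arcs: "interval_arcs a b (m+1) s = Bset a b s p \<union> {(p+1, l+1)}"
  proof -
    have "m + 1 - 1 - p = l + 1" unfolding p_def using lm by simp
    then show ?thesis using decomp[OF ab _ P0 Pp' Iv'] p1 by simp
  qed
  have imB: "image_mset snd (mset_set (Bset a b s p)) = M" using im_split[of a b s p "l+1" M] im arcs by simp
  let ?X = "s (m-1)" and ?Y = "s m"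
  have iX: "interval_seg a b ?X" using Iv' p1 by simp
  have iY: "interval_seg a b ?Y" using Iv' p1 by simp
  have "cycle_adj (m+1) (m-1) m" using m3 by (simp add: adj_char)
  then have XY: "seg_set ?X \<inter> seg_set ?Y \<noteq> {}" using rep_D[OF rep, of "m-1" m] m3 by simp
  obtain Z where iZ: "interval_seg a b Z" and Zu: "seg_set Z = seg_set ?X \<union> seg_set ?Y"
    using merge_geom[OF iX iY XY] by blast
  define s' where "s' = s(m-1 := Z)"
  have s'_lt: "\<And>x. x < m - 1 \<Longrightarrow> s' x = s x" unfolding s'_def by simp
  have s'_m1: "s' (m-1) = Z" unfolding s'_def by simp
  have rep': "ipseg_rep_cycle a b m s'"
  proof (rule rep_intro)
    fix i assume "i < m"
    then show "interval_seg a b (s' i) \<or> perm_seg a b (s' i)"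
      using rep_T[OF rep, of i] iZ unfolding s'_def by auto
  next
    fix i j assume ij: "i < j" "j < m"
    show "(seg_set (s' i) \<inter> seg_set (s' j) \<noteq> {}) = cycle_adj m i j"
    proof (cases "j < m - 1")
      case True
      then have "cycle_adj (m+1) i j = cycle_adj m i j" using ij by (simp add: adj_char)
      then show ?thesis using rep_D[OF rep, of i j] ij True s'_lt by simp
    next
      case False
      then have j: "j = m - 1" using ij by simp
      have i: "i < m - 1" using ij j by simp
      have "seg_set (s' i) \<inter> seg_set (s' j) \<noteq> {} \<longleftrightarrow>
            seg_set (s i) \<inter> seg_set ?X \<noteq> {} \<or> seg_set (s i) \<inter> seg_set ?Y \<noteq> {}"
        using s'_lt[OF i] j s'_m1 Zu by auto
      also have "\<dots> \<longleftrightarrow> cycle_adj (m+1) i (m-1) \<or> cycle_adj (m+1) i m"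
        using rep_D[OF rep, of i "m-1"] rep_D[OF rep, of i m] i m3 by simp
      also have "\<dots> \<longleftrightarrow> cycle_adj m i j" using i j m3 by (simp add: adj_char) arith
      finally show ?thesis .
    qed
  qed
  have P0': "perm_seg a b (s' 0)" using P0 s'_lt m3 by simp
  have Pp'': "perm_seg a b (s' p)" using Pp' s'_lt p1 by simp
  have Iv'': "\<And>x. p < x \<Longrightarrow> x < m \<Longrightarrow> interval_seg a b (s' x)"
    using Iv' iZ unfolding s'_def by auto
  have arcs': "interval_arcs a b m s' = Bset a b s p \<union> {(p+1, l)}"
  proof -
    have "m - 1 - p = l" unfolding p_def using lm by simp
    moreover have "Bset a b s' p = Bset a b s p" by (rule Bset_cong) (use s'_lt p1 in auto)
    ultimately show ?thesis using decomp[OF ab _ P0' Pp'' Iv''] p1 by simp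
  qed
  have "image_mset snd (mset_set (interval_arcs a b m s')) = M + {#l#}"
    unfolding arcs' using mset_ins[OF Bset_finite Bset_notin] imB by simp
  moreover have "\<exists>i<m. interval_seg a b (s' i)" using s'_m1 iZ m3 by (intro exI[of _ "m-1"]) auto
  moreover have "\<exists>i<m. perm_seg a b (s' i)" using P0' m3 by (intro exI[of _ 0]) auto
  ultimately show ?thesis unfolding H_def using rep' by blast
qed


lemma split_step:
  assumes ab: "a \<noteq> b" and m4: "4 \<le> m" and l1: "1 \<le> l" and HM: "H a b m (M + {#l#})"
  shows "H a b (m+1) (M + {#l+1#})"
proof -
  obtain s where rep: "ipseg_rep_cycle a b m s"
    and im: "image_mset snd (mset_set (interval_arcs a b m s)) = M + {#l#}"
    and lm: "l < m" and P0: "perm_seg a b (s 0)" and Pp: "perm_seg a b (s (m-l-1))"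
    and Iv: "\<forall>x. m-l-1 < x \<and> x < m \<longrightarrow> interval_seg a b (s x)"
    using normalize[OF ab HM, of l] by auto
  define p where "p = m - l - 1"
  have p1: "p + 1 < m" "p + 1 \<le> m - 1" using lm l1 unfolding p_def by auto
  have Pp': "perm_seg a b (s p)" using Pp p_def by simp
  have Iv': "\<And>x. p < x \<Longrightarrow> x < m \<Longrightarrow> interval_seg a b (s x)" using Iv p_def by auto
  have arcs: "interval_arcs a b m s = Bset a b s p \<union> {(p+1, l)}"
  proof -
    have "m - 1 - p = l" unfolding p_def using lm l1 by simp
    then show ?thesis using decomp[OF ab _ P0 Pp' Iv'] p1 by simp
  qed
  have imB: "image_mset snd (mset_set (Bset a b s p)) = M" using im_split[of a b s p l M] im arcs by simp
  let ?X = "s (m-1)" and ?J = "s (m-2)" and ?K = "s 0"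
  have iX: "interval_seg a b ?X" using Iv' p1 by simp
  have tJ: "interval_seg a b ?J \<or> perm_seg a b ?J" using rep_T[OF rep, of "m-2"] m4 by simp
  have tK: "interval_seg a b ?K \<or> perm_seg a b ?K" using rep_T[OF rep, of 0] m4 by simp
  have "cycle_adj m (m-1) (m-2)" using m4 by (simp add: adj_char) arith
  then have XJ: "seg_set ?X \<inter> seg_set ?J \<noteq> {}" using rep_D[OF rep, of "m-1" "m-2"] m4 by simp
  have "cycle_adj m (m-1) 0" using m4 by (simp add: adj_char)
  then have XK: "seg_set ?X \<inter> seg_set ?K \<noteq> {}" using rep_D[OF rep, of "m-1" 0] m4 by simp
  have "\<not> cycle_adj m (m-2) 0" using m4 by (simp add: adj_char) arith
  then have JK: "seg_set ?J \<inter> seg_set ?K = {}" using rep_D[OF rep, of "m-2" 0] m4 by simp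
  obtain X1 X2 where i1: "interval_seg a b X1" and i2: "interval_seg a b X2"
    and sub1: "seg_set X1 \<subseteq> seg_set ?X" and sub2: "seg_set X2 \<subseteq> seg_set ?X"
    and m12: "seg_set X1 \<inter> seg_set X2 \<noteq> {}"
    and m1J: "seg_set X1 \<inter> seg_set ?J \<noteq> {}" and d1K: "seg_set X1 \<inter> seg_set ?K = {}"
    and m2K: "seg_set X2 \<inter> seg_set ?K \<noteq> {}" and d2J: "seg_set X2 \<inter> seg_set ?J = {}"
    using split_geom[OF ab iX tJ tK XJ XK JK] by blast
  define s' where "s' = s(m-1 := X1, m := X2)"
  have s'_lt: "\<And>x. x < m - 1 \<Longrightarrow> s' x = s x" unfolding s'_def by auto
  have s'_m1: "s' (m-1) = X1" unfolding s'_def using m4 by auto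
  have s'_m: "s' m = X2" unfolding s'_def by simp
  have far: "\<And>i. i < m - 1 \<Longrightarrow> i \<noteq> 0 \<Longrightarrow> i \<noteq> m - 2 \<Longrightarrow> seg_set (s i) \<inter> seg_set ?X = {}"
  proof -
    fix i assume i: "i < m - 1" "i \<noteq> 0" "i \<noteq> m - 2"
    then have "\<not> cycle_adj m i (m-1)" using m4 by (simp add: adj_char) arith
    then show "seg_set (s i) \<inter> seg_set ?X = {}" using rep_D[OF rep, of i "m-1"] i m4 by simp
  qed
  have rep': "ipseg_rep_cycle a b (m+1) s'"
  proof (rule rep_intro)
    fix i assume "i < m + 1"
    then show "interval_seg a b (s' i) \<or> perm_seg a b (s' i)"
      using rep_T[OF rep, of i] i1 i2 unfolding s'_def by auto
  next
    fix i j assume ij: "i < j" "j < m + 1"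
    consider (a) "j < m - 1" | (b) "j = m - 1" | (c) "j = m" "i < m - 1" | (d) "j = m" "i = m - 1"
      using ij by linarith
    then show "(seg_set (s' i) \<inter> seg_set (s' j) \<noteq> {}) = cycle_adj (m+1) i j"
    proof cases
      case a
      then have "cycle_adj (m+1) i j = cycle_adj m i j" using ij by (simp add: adj_char) arith
      then show ?thesis using rep_D[OF rep, of i j] ij a s'_lt by simp
    next
      case b
      have i: "i < m - 1" using ij b by simp
      have adj: "cycle_adj (m+1) i j \<longleftrightarrow> i = m - 2" using i b m4 by (simp add: adj_char) arith
      show ?thesis
      proof (cases "i = m - 2")
        case True then show ?thesis using adj m1J s'_lt[OF i] s'_m1 b by (simp add: Int_commute)
      next
        case False
        show ?thesis
        proof (cases "i = 0")
          case True then show ?thesis using adj d1K s'_lt[OF i] s'_m1 b False by (simp add: Int_commute)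
        next
          case False2: False
          have "seg_set (s i) \<inter> seg_set X1 = {}" using far[OF i False2 False] sub1 by blast
          then show ?thesis using adj s'_lt[OF i] s'_m1 b False by simp
        qed
      qed
    next
      case c
      have i: "i < m - 1" using c by simp
      have adj: "cycle_adj (m+1) i j \<longleftrightarrow> i = 0" using i c m4 by (simp add: adj_char) arith
      show ?thesis
      proof (cases "i = 0")
        case True then show ?thesis using adj m2K s'_lt[OF i] s'_m c by (simp add: Int_commute)
      next
        case False
        show ?thesis
        proof (cases "i = m - 2")
          case True then show ?thesis using adj d2J s'_lt[OF i] s'_m c False by (simp add: Int_commute)
        next
          case False2: False
          have "seg_set (s i) \<inter> seg_set X2 = {}" using far[OF i False False2] sub2 by blast
          then show ?thesis using adj s'_lt[OF i] s'_m c False by simp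
        qed
      qed
    next
      case d
      have "cycle_adj (m+1) i j" using d m4 by (simp add: adj_char)
      then show ?thesis using d s'_m1 s'_m m12 by simp
    qed
  qed
  have P0': "perm_seg a b (s' 0)" using P0 s'_lt m4 by simp
  have Pp'': "perm_seg a b (s' p)" using Pp' s'_lt p1 by simp
  have Iv'': "\<And>x. p < x \<Longrightarrow> x < m + 1 \<Longrightarrow> interval_seg a b (s' x)"
    using Iv' i1 i2 unfolding s'_def by auto
  have arcs': "interval_arcs a b (m+1) s' = Bset a b s p \<union> {(p+1, l+1)}"
  proof -
    have "m + 1 - 1 - p = l + 1" unfolding p_def using lm by simp
    moreover have "Bset a b s' p = Bset a b s p" by (rule Bset_cong) (use s'_lt p1 in auto)
    ultimately show ?thesis using decomp[OF ab _ P0' Pp'' Iv''] p1 by simp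
  qed
  have "image_mset snd (mset_set (interval_arcs a b (m+1) s')) = M + {#l+1#}"
    unfolding arcs' using mset_ins[OF Bset_finite Bset_notin] imB by simp
  moreover have "\<exists>i<m+1. interval_seg a b (s' i)" using s'_m i2 by (intro exI[of _ m]) auto
  moreover have "\<exists>i<m+1. perm_seg a b (s' i)" using P0' by (intro exI[of _ 0]) auto
  ultimately show ?thesis unfolding H_def using rep' by blast
qed


lemma Bset_le1: "p \<le> 1 \<Longrightarrow> Bset a b s p = {}"
  unfolding Bset_def by auto

definition S4 :: "real \<Rightarrow> real \<Rightarrow> nat \<Rightarrow> seg" where
  "S4 a b i = (if i = 0 then ((0,a),(2,b)) else if i = 1 then ((2,a),(0,b))
     else if i = 2 then ((1,a),(2,a)) else ((0,a),(1,a)))"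

lemma tri_H4:
  assumes ab: "a \<noteq> b"
  shows "H a b 4 {#2#}"
proof -
  let ?S = "S4 a b"
  have S0: "?S 0 = ((0,a),(2,b))" and S1: "?S 1 = ((2,a),(0,b))" and S2: "?S 2 = ((1,a),(2,a))"
    and S3: "?S 3 = ((0,a),(1,a))" by (simp_all add: S4_def)
  have P0: "perm_seg a b (?S 0)" and P1: "perm_seg a b (?S 1)" and I2: "interval_seg a b (?S 2)"
    and I3: "interval_seg a b (?S 3)"
    by (simp_all add: S4_def perm_seg_def interval_seg_def)
  have t0: "tr a (?S 0) = {0}" unfolding S0 tr_def seg_set_def using perm_trace1[OF ab] by auto
  have t1: "tr a (?S 1) = {2}" unfolding S1 tr_def seg_set_def using perm_trace1[OF ab] by auto
  have t2: "tr a (?S 2) = {1..2}" unfolding S2 tr_hor by simp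
  have t3: "tr a (?S 3) = {0..1}" unfolding S3 tr_hor by simp
  have o2: "on_line a (?S 2)" unfolding S2 by (rule on_line_hor)
  have o3: "on_line a (?S 3)" unfolding S3 by (rule on_line_hor)
  have m01: "seg_set (?S 0) \<inter> seg_set (?S 1) \<noteq> {}"
  proof -
    have "(1, (a+b)/2) \<in> seg_set (?S 0)" unfolding S0 seg_set_def fst_conv snd_conv mem_seg
      by (rule exI[of _ "1/2"]) (simp add: field_simps)
    moreover have "(1, (a+b)/2) \<in> seg_set (?S 1)" unfolding S1 seg_set_def fst_conv snd_conv mem_seg
      by (rule exI[of _ "1/2"]) (simp add: field_simps)
    ultimately show ?thesis by blast
  qed
  have m02: "seg_set (?S 0) \<inter> seg_set (?S 2) = {}"
    using disj_tr[OF o2, of "?S 0"] t0 t2 by (auto simp: Int_commute)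
  have m03: "seg_set (?S 0) \<inter> seg_set (?S 3) \<noteq> {}"
    using disj_tr[OF o3, of "?S 0"] t0 t3 by (auto simp: Int_commute)
  have m12: "seg_set (?S 1) \<inter> seg_set (?S 2) \<noteq> {}"
    using disj_tr[OF o2, of "?S 1"] t1 t2 by (auto simp: Int_commute)
  have m13: "seg_set (?S 1) \<inter> seg_set (?S 3) = {}"
    using disj_tr[OF o3, of "?S 1"] t1 t3 by (auto simp: Int_commute)
  have m23: "seg_set (?S 2) \<inter> seg_set (?S 3) \<noteq> {}"
  proof -
    have "tr a (?S 2) \<inter> tr a (?S 3) \<noteq> {}" using t2 t3 by auto
    then show ?thesis using disj_tr[OF o2, of "?S 3"] by simp
  qed
  have rep: "ipseg_rep_cycle a b 4 ?S"
  proof (rule rep_intro)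
    fix i :: nat assume "i < 4"
    then have "i = 0 \<or> i = 1 \<or> i = 2 \<or> i = 3" by arith
    then show "interval_seg a b (?S i) \<or> perm_seg a b (?S i)" using P0 P1 I2 I3 by auto
  next
    fix i j :: nat assume ij: "i < j" "j < 4"
    then have "(i = 0 \<and> j = 1) \<or> (i = 0 \<and> j = 2) \<or> (i = 0 \<and> j = 3) \<or> (i = 1 \<and> j = 2) \<or>
      (i = 1 \<and> j = 3) \<or> (i = 2 \<and> j = 3)" by arith
    then show "(seg_set (?S i) \<inter> seg_set (?S j) \<noteq> {}) = cycle_adj 4 i j"
      using m01 m02 m03 m12 m13 m23 by (auto simp: adj_char)
  qed
  have arcs: "interval_arcs a b 4 ?S = {(2,2)}"
  proof -
    have "\<And>x. 1 < x \<Longrightarrow> x < 4 \<Longrightarrow> interval_seg a b (?S x)"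
    proof -
      fix x :: nat assume "1 < x" "x < 4"
      then have "x = 2 \<or> x = 3" by arith
      then show "interval_seg a b (?S x)" using I2 I3 by auto
    qed
    from decomp[where s="?S", OF ab _ P0 P1 this] show ?thesis using Bset_le1[of 1 a b ?S] by simp
  qed
  have e1: "\<exists>i<4. interval_seg a b (?S i)" using I2 by (intro exI[of _ 2]) auto
  have e2: "\<exists>i<4. perm_seg a b (?S i)" using P0 by (intro exI[of _ 0]) auto
  show ?thesis unfolding H_def using rep arcs e1 e2 by auto
qed

lemma triangle_step:
  assumes ab: "a \<noteq> b" and HM: "H a b 3 (M + {#1#})"
  shows "H a b 4 (M + {#2#})"
proof -
  obtain s where im: "image_mset snd (mset_set (interval_arcs a b 3 s)) = M + {#1#}"
    and P0: "perm_seg a b (s 0)" and Pp: "perm_seg a b (s (3-1-1))"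
    and Iv: "\<forall>x. 3-1-1 < x \<and> x < 3 \<longrightarrow> interval_seg a b (s x)"
    using normalize[OF ab HM, of 1] by auto
  have "interval_arcs a b 3 s = Bset a b s 1 \<union> {(1+1, 3-1-1)}"
    by (rule decomp[where s=s, OF ab _ P0]) (use Pp Iv in auto)
  then have "interval_arcs a b 3 s = {(2,1)}" using Bset_le1[of 1 a b s] by simp
  then have "M = {#}" using im by simp
  then show ?thesis using tri_H4[OF ab] by simp
qed

lemma step:
  assumes ab: "a \<noteq> b" and m3: "3 \<le> m" and l1: "1 \<le> l" and ml: "m = 3 \<longrightarrow> l = 1"
  shows "H a b (m+1) (M + {#l+1#}) \<longleftrightarrow> H a b m (M + {#l#})"
proof
  assume "H a b (m+1) (M + {#l+1#})" then show "H a b m (M + {#l#})" using merge_step[OF ab m3 l1] by blast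
next
  assume h: "H a b m (M + {#l#})"
  show "H a b (m+1) (M + {#l+1#})"
  proof (cases "m = 3")
    case True then show ?thesis using triangle_step[OF ab] h ml by (simp add: numeral_eq_Suc)
  next
    case False then show ?thesis using split_step[OF ab _ l1 h] m3 by simp
  qed
qed

lemma R:
  assumes ab: "a \<noteq> b"
  shows "\<forall>m K. 3 \<le> m \<longrightarrow> (H a b (m + y) (K + {#y+1#}) \<longleftrightarrow> H a b m (K + {#1#}))"
proof (induction y)
  case 0 then show ?case by simp
next
  case (Suc y)
  show ?case
  proof (intro allI impI)
    fix m K assume m3: "3 \<le> (m::nat)"
    have "H a b (m + Suc y) (K + {#Suc y + 1#}) \<longleftrightarrow> H a b ((m + y) + 1) (K + {#(y+1)+1#})" by simp
    also have "\<dots> \<longleftrightarrow> H a b (m + y) (K + {#y+1#})"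
      by (rule step[OF ab]) (use m3 in auto)
    also have "\<dots> \<longleftrightarrow> H a b m (K + {#1#})" using Suc.IH m3 by blast
    finally show "H a b (m + Suc y) (K + {#Suc y + 1#}) \<longleftrightarrow> H a b m (K + {#1#})" .
  qed
qed

lemma mainH:
  assumes ab: "a \<noteq> b"
  shows "(\<forall>x\<in>#M. 1 \<le> x) \<Longrightarrow> 3 \<le> m \<Longrightarrow>
     H a b (m + sum_mset (image_mset (\<lambda>l. l - 1) M)) (M + N) \<longleftrightarrow> H a b m (replicate_mset (size M) 1 + N)"
proof (induction M arbitrary: N)
  case empty then show ?case by simp
next
  case (add x M)
  have x1: "1 \<le> x" using add.prems by simp
  then obtain y where y: "x = y + 1" by (metis add.commute le_Suc_ex)
  let ?D = "sum_mset (image_mset (\<lambda>l. l - 1) M)"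
  have "H a b (m + sum_mset (image_mset (\<lambda>l. l - 1) (add_mset x M))) (add_mset x M + N)
        \<longleftrightarrow> H a b ((m + ?D) + y) ((M + N) + {#y+1#})" using y by (simp add: ac_simps)
  also have "\<dots> \<longleftrightarrow> H a b (m + ?D) ((M + N) + {#1#})"
    using R[OF ab, of y] add.prems by simp
  also have "\<dots> \<longleftrightarrow> H a b (m + ?D) (M + (N + {#1#}))" by (simp add: ac_simps)
  also have "\<dots> \<longleftrightarrow> H a b m (replicate_mset (size M) 1 + (N + {#1#}))"
    using add.IH[of "N + {#1#}"] add.prems by simp
  also have "\<dots> \<longleftrightarrow> H a b m (replicate_mset (size (add_mset x M)) 1 + N)" by (simp add: ac_simps)
  finally show ?case .
qed


theorem mainTheorem4:
  fixes a b :: real and n t :: nat and ls :: "nat list"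
  assumes "a \<noteq> b"
    and "n \<ge> 4" and "t \<ge> 1"
    and "length ls = t" and "\<forall>l\<in>set ls. l \<ge> 1"
    and "(\<Sum>l\<leftarrow>ls. l - 1) + 3 \<le> n"
  shows "has_rep_with_interval_arcs a b n ls \<longleftrightarrow>
         has_rep_with_interval_arcs a b (n - (\<Sum>l\<leftarrow>ls. l - 1)) (replicate t 1)"
proof -
  let ?D = "(\<Sum>l\<leftarrow>ls. l - 1)"
  have D: "?D = sum_mset (image_mset (\<lambda>l. l - 1) (mset ls))"
    by (metis mset_map sum_mset_sum_list)
  have "H a b (n - ?D + sum_mset (image_mset (\<lambda>l. l - 1) (mset ls))) (mset ls + {#}) \<longleftrightarrow>
        H a b (n - ?D) (replicate_mset (size (mset ls)) 1 + {#})"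
    by (rule mainH[OF assms(1)]) (use assms(5,6) in auto)
  moreover have "n - ?D + sum_mset (image_mset (\<lambda>l. l - 1) (mset ls)) = n" using D assms(6) by simp
  ultimately have "H a b n (mset ls) \<longleftrightarrow> H a b (n - ?D) (mset (replicate t 1))"
    using assms(4) by simp
  then show ?thesis unfolding has_rep_H .
qed

end
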